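(* All rules of $\mathsf{G}(\mathbf{KT}^+_D)$ except $(D_K^+)$ (that is, the eight propositional rules and $(D_T^+)$) are height-preserving invertible: whenever the conclusion of an instance of such a rule has a derivation of height $n$, each premise of that instance has a derivation of height at most $n$.
   Context: Language: fix a finite nonempty set $\mathsf{Agt}$ of agents and a countable set $\mathsf{Prop}$ of propositional variables; $\mathsf{Grp}$ is the set of nonempty subsets of $\mathsf{Agt}$. Formulas: $\alpha::=p\mid\bot\mid\alpha\wedge\alpha\mid\alpha\vee\alpha\mid\alpha\rightarrow\alpha\mid\neg\alpha\mid D_G\alpha$ ($p\in\mathsf{Prop}$, $G\in\mathsf{Grp}$). Outmost-boxed formula: one of the form $D_G\gamma$. Calculus $\mathsf{G}(\mathbf{KT}^+_D)$ (a derivation is a finite tree built from initial sequents by the rules; its height is the maximum length of a branch from the end sequent to an initial sequent): a T-sequent $\Sigma\mid\Gamma\Rightarrow\Delta$ consists of finite multisets $\Gamma,\Delta$ of formulas and a finite multiset $\Sigma$ of outmost-boxed formulas. Initial sequents: $\Sigma\mid\Gamma,p\Rightarrow p,\Delta$ ($p\in\mathsf{Prop}$) and $\Sigma\mid\bot,\Gamma\Rightarrow\Delta$. Propositional rules (with $\Sigma$ unchanged): $(R\wedge)$ from $\Sigma\mid\Gamma\Rightarrow\Delta,\alpha_1$ and $\Sigma\mid\Gamma\Rightarrow\Delta,\alpha_2$ infer $\Sigma\mid\Gamma\Rightarrow\Delta,\alpha_1\wedge\alpha_2$; $(L\wedge)$ from $\Sigma\mid\alpha_1,\alpha_2,\Gamma\Rightarrow\Delta$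 infer $\Sigma\mid\alpha_1\wedge\alpha_2,\Gamma\Rightarrow\Delta$; $(R\vee)$ from $\Sigma\mid\Gamma\Rightarrow\Delta,\alpha_1,\alpha_2$ infer $\Sigma\mid\Gamma\Rightarrow\Delta,\alpha_1\vee\alpha_2$; $(L\vee)$ from $\Sigma\mid\alpha_1,\Gamma\Rightarrow\Delta$ and $\Sigma\mid\alpha_2,\Gamma\Rightarrow\Delta$ infer $\Sigma\mid\alpha_1\vee\alpha_2,\Gamma\Rightarrow\Delta$; $(R\rightarrow)$ from $\Sigma\mid\alpha_1,\Gamma\Rightarrow\Delta,\alpha_2$ infer $\Sigma\mid\Gamma\Rightarrow\Delta,\alpha_1\rightarrow\alpha_2$; $(L\rightarrow)$ from $\Sigma\mid\Gamma\Rightarrow\Delta,\alpha_1$ and $\Sigma\mid\alpha_2,\Gamma\Rightarrow\Delta$ infer $\Sigma\mid\alpha_1\rightarrow\alpha_2,\Gamma\Rightarrow\Delta$; $(R\neg)$ from $\Sigma\mid\alpha,\Gamma\Rightarrow\Delta$ infer $\Sigma\mid\Gamma\Rightarrow\Delta,\neg\alpha$; $(L\neg)$ from $\Sigma\mid\Gamma\Rightarrow\Delta,\alpha$ infer $\Sigma\mid\neg\alpha,\Gamma\Rightarrow\Delta$. Modal rules: $(D_K^+)$: from $\emptyset\mid\alpha_1,\dots,\alpha_n\Rightarrow\beta$ ($n\ge0$) infer $\Sigma,D_{G_1}\alpha_1,\dots,D_{G_n}\alpha_n\mid\Pi\Rightarrow D_G\beta,\Omega$, provided $G_i\subseteq G$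 for all $i$, $\Sigma$ consists only of formulas $D_H\gamma$ with $H\not\subseteq G$, $\Pi$ only of propositional variables and $\bot$, and $\Omega$ only of propositional variables, $\bot$ and outmost-boxed formulas; $(D_T^+)$: from $D_G\alpha,\Sigma\mid\Gamma,\alpha\Rightarrow\Delta$ infer $\Sigma\mid\Gamma,D_G\alpha\Rightarrow\Delta$. *)

theory Defs
  imports Main "HOL-Library.Multiset"
begin

text \<open>Formulas over agents of a finite type 'a (the finite nonempty set Agt = UNIV)
 and propositional variables indexed by nat (the countable set Prop).
 Box G \<alpha> is D_G \<alpha>; G must be a nonempty group (checked by wf_fm).\<close>

datatype 'a fm = At nat | Bot | And "'a fm" "'a fm" | Or "'a fm" "'a fm"
  | Imp "'a fm" "'a fm" | Neg "'a fm" | Box "'a set" "'a fm"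

fun wf_fm :: "('a::finite) fm \<Rightarrow> bool" where
  "wf_fm (At p) = True"
| "wf_fm Bot = True"
| "wf_fm (And a b) = (wf_fm a \<and> wf_fm b)"
| "wf_fm (Or a b) = (wf_fm a \<and> wf_fm b)"
| "wf_fm (Imp a b) = (wf_fm a \<and> wf_fm b)"
| "wf_fm (Neg a) = wf_fm a"
| "wf_fm (Box G a) = (G \<noteq> {} \<and> wf_fm a)"

definition is_boxed :: "'a fm \<Rightarrow> bool" where
  "is_boxed f \<longleftrightarrow> (\<exists>G a. f = Box G a)"

definition is_atom_or_bot :: "'a fm \<Rightarrow> bool" where
  "is_atom_or_bot f \<longleftrightarrow> f = Bot \<or> (\<exists>p. f = At p)"

text \<open>A T-sequent \<Sigma> | \<Gamma> \<Rightarrow> \<Delta> is the triple (\<Sigma>, \<Gamma>, \<Delta>).\<close>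
type_synonym 'a tseq = "'a fm multiset \<times> 'a fm multiset \<times> 'a fm multiset"

definition wf_tseq :: "('a::finite) tseq \<Rightarrow> bool" where
  "wf_tseq s \<longleftrightarrow> (case s of (S, Gm, D) \<Rightarrow>
     (\<forall>f\<in>#S. is_boxed f) \<and> (\<forall>f\<in>#S + Gm + D. wf_fm f))"

inductive nonK_rule :: "'a tseq list \<Rightarrow> 'a tseq \<Rightarrow> bool" where
  R_and: "nonK_rule [(S, Gm, add_mset a1 D), (S, Gm, add_mset a2 D)] (S, Gm, add_mset (And a1 a2) D)"
| L_and: "nonK_rule [(S, add_mset a1 (add_mset a2 Gm), D)] (S, add_mset (And a1 a2) Gm, D)"
| R_or: "nonK_rule [(S, Gm, add_mset a1 (add_mset a2 D))] (S, Gm, add_mset (Or a1 a2) D)"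
| L_or: "nonK_rule [(S, add_mset a1 Gm, D), (S, add_mset a2 Gm, D)] (S, add_mset (Or a1 a2) Gm, D)"
| R_imp: "nonK_rule [(S, add_mset a1 Gm, add_mset a2 D)] (S, Gm, add_mset (Imp a1 a2) D)"
| L_imp: "nonK_rule [(S, Gm, add_mset a1 D), (S, add_mset a2 Gm, D)] (S, add_mset (Imp a1 a2) Gm, D)"
| R_neg: "nonK_rule [(S, add_mset a Gm, D)] (S, Gm, add_mset (Neg a) D)"
| L_neg: "nonK_rule [(S, Gm, add_mset a D)] (S, add_mset (Neg a) Gm, D)"
| D_T: "nonK_rule [(add_mset (Box G a) S, add_mset a Gm, D)] (S, add_mset (Box G a) Gm, D)"

inductive K_rule :: "'a tseq list \<Rightarrow> 'a tseq \<Rightarrow> bool" where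
  D_K: "\<lbrakk> length As = length Gs; \<forall>Gi\<in>set Gs. Gi \<subseteq> G;
          \<forall>f\<in>#S. \<exists>H c. f = Box H c \<and> \<not> H \<subseteq> G;
          \<forall>f\<in>#P. is_atom_or_bot f;
          \<forall>f\<in>#Om. is_atom_or_bot f \<or> is_boxed f \<rbrakk>
        \<Longrightarrow> K_rule [({#}, mset As, {#b#})]
              (S + mset (map2 Box Gs As), P, add_mset (Box G b) Om)"

text \<open>derivable n s: s has a derivation in G(KT+_D) of height at most n
 (initial sequents have height 0).\<close>
inductive derivable :: "nat \<Rightarrow> ('a::finite) tseq \<Rightarrow> bool" where
  init_at: "\<lbrakk> wf_tseq (S, Gm, D); At p \<in># Gm; At p \<in># D \<rbrakk> \<Longrightarrow> derivable n (S, Gm, D)"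
| init_bot: "\<lbrakk> wf_tseq (S, Gm, D); Bot \<in># Gm \<rbrakk> \<Longrightarrow> derivable n (S, Gm, D)"
| step: "\<lbrakk> nonK_rule ps c; \<forall>p\<in>set ps. derivable n p \<rbrakk> \<Longrightarrow> derivable (Suc n) c"
| stepK: "\<lbrakk> K_rule ps c; wf_tseq c; \<forall>p\<in>set ps. derivable n p \<rbrakk> \<Longrightarrow> derivable (Suc n) c"

end

theory Submission
  imports Defs
begin

fun tadd :: "'a tseq \<Rightarrow> 'a tseq \<Rightarrow> 'a tseq" where
  "tadd (a,b,c) (x,y,z) = (a+x, b+y, c+z)"

definition pr :: "bool \<Rightarrow> 'a fm \<Rightarrow> 'a tseq" where
  "pr s f = (if s then ({#}, {#f#}, {#}) else ({#}, {#}, {#f#}))"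

fun adds :: "bool \<Rightarrow> 'a fm \<Rightarrow> 'a tseq list option" where
  "adds True (And a b) = Some [({#}, {#a, b#}, {#})]"
| "adds False (And a b) = Some [({#}, {#}, {#a#}), ({#}, {#}, {#b#})]"
| "adds True (Or a b) = Some [({#}, {#a#}, {#}), ({#}, {#b#}, {#})]"
| "adds False (Or a b) = Some [({#}, {#}, {#a, b#})]"
| "adds True (Imp a b) = Some [({#}, {#}, {#a#}), ({#}, {#b#}, {#})]"
| "adds False (Imp a b) = Some [({#}, {#a#}, {#b#})]"
| "adds True (Neg a) = Some [({#}, {#}, {#a#})]"
| "adds False (Neg a) = Some [({#}, {#a#}, {#})]"
| "adds True (Box G a) = Some [({#Box G a#}, {#a#}, {#})]"
| "adds _ _ = None"

lemma mk: "adds s f = Some as \<Longrightarrow> c = tadd C (pr s f) \<Longrightarrow> ps = map (tadd C) as \<Longrightarrow>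
  \<exists>s f C as. adds s f = Some as \<and> c = tadd C (pr s f) \<and> ps = map (tadd C) as"
  by blast

lemma rule_fwd:
  assumes "nonK_rule ps c"
  shows "\<exists>s f C as. adds s f = Some as \<and> c = tadd C (pr s f) \<and> ps = map (tadd C) as"
  using assms
proof (cases rule: nonK_rule.cases)
  case (R_and S Gm a1 D a2) show ?thesis
    by (rule mk[of False "And a1 a2" _ _ "(S,Gm,D)"]) (auto simp: R_and pr_def)
next
  case (L_and S a1 a2 Gm D) show ?thesis
    by (rule mk[of True "And a1 a2" _ _ "(S,Gm,D)"]) (auto simp: L_and pr_def)
next
  case (R_or S Gm a1 a2 D) show ?thesis
    by (rule mk[of False "Or a1 a2" _ _ "(S,Gm,D)"]) (auto simp: R_or pr_def)
next
  case (L_or S a1 Gm D a2) show ?thesis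
    by (rule mk[of True "Or a1 a2" _ _ "(S,Gm,D)"]) (auto simp: L_or pr_def)
next
  case (R_imp S a1 Gm a2 D) show ?thesis
    by (rule mk[of False "Imp a1 a2" _ _ "(S,Gm,D)"]) (auto simp: R_imp pr_def)
next
  case (L_imp S Gm a1 D a2) show ?thesis
    by (rule mk[of True "Imp a1 a2" _ _ "(S,Gm,D)"]) (auto simp: L_imp pr_def)
next
  case (R_neg S a Gm D) show ?thesis
    by (rule mk[of False "Neg a" _ _ "(S,Gm,D)"]) (auto simp: R_neg pr_def)
next
  case (L_neg S Gm a D) show ?thesis
    by (rule mk[of True "Neg a" _ _ "(S,Gm,D)"]) (auto simp: L_neg pr_def)
next
  case (D_T G a S Gm D) show ?thesis
    by (rule mk[of True "Box G a" _ _ "(S,Gm,D)"]) (auto simp: D_T pr_def)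
qed

lemma rule_bwd:
  assumes "adds s f = Some as"
  shows "nonK_rule (map (tadd C) as) (tadd C (pr s f))"
proof -
  obtain S G D where C: "C = (S,G,D)" by (cases C) auto
  show ?thesis using assms unfolding C
    by (cases s; cases f) (auto simp: pr_def add_mset_commute intro: nonK_rule.intros)
qed

lemma derivable_wf: "derivable n c \<Longrightarrow> wf_tseq c"
proof (induction rule: derivable.induct)
  case (step ps c n)
  from step.hyps(1) show ?case
  proof (cases rule: nonK_rule.cases)
  qed (use step.IH in \<open>auto simp: wf_tseq_def\<close>)
qed auto

lemma derivable_Suc: "derivable n c \<Longrightarrow> derivable (Suc n) c"
proof (induction rule: derivable.induct)
  case (init_at S Gm D p n) then show ?case by (blast intro: derivable.init_at)
next
  case (init_bot S Gm D n) then show ?case by (blast intro: derivable.init_bot)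
next
  case (step ps c n) then show ?case by (blast intro: derivable.step)
next
  case (stepK ps c n) then show ?case by (blast intro: derivable.stepK)
qed

lemma adds_wf:
  assumes "adds s f = Some as" "a \<in> set as" "wf_tseq (tadd C (pr s f))"
  shows "wf_tseq (tadd C a)"
proof -
  obtain S G D where C: "C = (S,G,D)" by (cases C) auto
  show ?thesis using assms unfolding C
    by (cases s; cases f) (auto simp: pr_def wf_tseq_def is_boxed_def)
qed

lemma adds_atom:
  assumes "adds s f = Some as" "a \<in> set as"
  shows "At p \<in># fst (snd (tadd C (pr s f))) \<Longrightarrow> At p \<in># fst (snd (tadd C a))"
    and "At p \<in># snd (snd (tadd C (pr s f))) \<Longrightarrow> At p \<in># snd (snd (tadd C a))"
    and "Bot \<in># fst (snd (tadd C (pr s f))) \<Longrightarrow> Bot \<in># fst (snd (tadd C a))"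
proof -
  obtain S G D where C: "C = (S,G,D)" by (cases C) auto
  show "At p \<in># fst (snd (tadd C (pr s f))) \<Longrightarrow> At p \<in># fst (snd (tadd C a))"
    using assms unfolding C by (cases s; cases f) (auto simp: pr_def)
  show "At p \<in># snd (snd (tadd C (pr s f))) \<Longrightarrow> At p \<in># snd (snd (tadd C a))"
    using assms unfolding C by (cases s; cases f) (auto simp: pr_def)
  show "Bot \<in># fst (snd (tadd C (pr s f))) \<Longrightarrow> Bot \<in># fst (snd (tadd C a))"
    using assms unfolding C by (cases s; cases f) (auto simp: pr_def)
qed

lemma decomp:
  assumes "tadd C (pr s f) = tadd C' (pr s' f')" "(s,f) \<noteq> (s',f')"
  shows "\<exists>E. C = tadd E (pr s' f') \<and> C' = tadd E (pr s f)"
proof -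
  obtain S G D where C: "C = (S,G,D)" by (cases C) auto
  obtain S' G' D' where C': "C' = (S',G',D')" by (cases C') auto
  have ms: "M + {#x#} = N + {#y#} \<Longrightarrow> x \<noteq> y \<Longrightarrow> M = (M - {#y#}) + {#y#} \<and> N = (M - {#y#}) + {#x#}"
    for M N :: "'a fm multiset" and x y
    by (simp add: add_eq_conv_ex) (metis add_mset_remove_trivial)
  show ?thesis
  proof (cases s; cases s')
    assume "s" "s'"
    with assms have "G + {#f#} = G' + {#f'#}" "f \<noteq> f'" "S = S'" "D = D'" unfolding C C' by (auto simp: pr_def)
    with ms[OF this(1,2)] show ?thesis unfolding C C' using \<open>s\<close> \<open>s'\<close>
      by (intro exI[of _ "(S, G - {#f'#}, D)"]) (auto simp: pr_def)
  next
    assume "\<not>s" "\<not>s'"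
    with assms have "D + {#f#} = D' + {#f'#}" "f \<noteq> f'" "S = S'" "G = G'" unfolding C C' by (auto simp: pr_def)
    with ms[OF this(1,2)] show ?thesis unfolding C C' using \<open>\<not>s\<close> \<open>\<not>s'\<close>
      by (intro exI[of _ "(S, G, D - {#f'#})"]) (auto simp: pr_def)
  next
    assume "s" "\<not>s'"
    with assms show ?thesis unfolding C C'
      by (intro exI[of _ "(S, G, D')"]) (auto simp: pr_def)
  next
    assume "\<not>s" "s'"
    with assms show ?thesis unfolding C C'
      by (intro exI[of _ "(S, G', D)"]) (auto simp: pr_def)
  qed
qed

lemma K_not:
  assumes "K_rule ps c" "adds s f = Some as" "c = tadd C (pr s f)"
  shows False
  using assms(1)
proof (cases rule: K_rule.cases)
  case (D_K As Gs G S P Om b)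
  obtain S1 G1 D1 where C: "C = (S1,G1,D1)" by (cases C) auto
  show False
  proof (cases s)
    case True
    with assms(3) D_K C have "f \<in># P" by (auto simp: pr_def)
    with D_K have "is_atom_or_bot f" by auto
    with assms(2) True show False by (auto simp: is_atom_or_bot_def)
  next
    case False
    with assms(3) D_K C have "f \<in># add_mset (Box G b) Om" by (auto simp: pr_def)
    with D_K have "is_atom_or_bot f \<or> is_boxed f" by (auto simp: is_boxed_def)
    with assms(2) False show False by (cases f) (auto simp: is_atom_or_bot_def is_boxed_def)
  qed
qed

lemma main:
  "derivable n c \<Longrightarrow> adds s f = Some as \<Longrightarrow> c = tadd C (pr s f) \<Longrightarrow> a \<in> set as \<Longrightarrow> derivable n (tadd C a)"
proof (induction n c arbitrary: s f as C a rule: derivable.induct)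
  case (init_at S Gm D p n)
  have w: "wf_tseq (tadd C a)" using adds_wf[OF init_at(4,6)] init_at(1,5) by simp
  obtain S' G' D' where e: "tadd C a = (S',G',D')" by (cases "tadd C a") auto
  have "At p \<in># G'" "At p \<in># D'"
    using adds_atom(1,2)[OF init_at(4,6), of p C] init_at(2,3) e by (auto simp: init_at(5)[symmetric])
  then show ?case using w e by (auto intro: derivable.init_at)
next
  case (init_bot S Gm D n)
  have w: "wf_tseq (tadd C a)" using adds_wf[OF init_bot(3,5)] init_bot(1,4) by simp
  obtain S' G' D' where e: "tadd C a = (S',G',D')" by (cases "tadd C a") auto
  have "Bot \<in># G'"
    using adds_atom(3)[OF init_bot(3,5), of C] init_bot(2) e by (auto simp: init_bot(4)[symmetric])
  then show ?case using w e by (auto intro: derivable.init_bot)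
next
  case (stepK ps c n)
  show ?case using K_not[OF stepK.hyps(1) stepK.prems(1,2)] by (rule FalseE)
next
  case (step ps c n)
  obtain s' f' C' as' where r: "adds s' f' = Some as'" "c = tadd C' (pr s' f')" "ps = map (tadd C') as'"
    using rule_fwd[OF step.hyps(1)] by blast
  show ?case
  proof (cases "(s,f) = (s',f')")
    case True
    then have "as = as'" using r step.prems by simp
    have "C = C'" using True r(2) step.prems(2)
      by (cases C; cases C'; auto simp: pr_def split: if_splits)
    then have "tadd C a \<in> set ps" using r \<open>as = as'\<close> step.prems by auto
    then show ?thesis using derivable_Suc conjunct1[OF bspec[OF step.IH]] by metis
  next
    case False
    obtain E where E: "C = tadd E (pr s' f')" "C' = tadd E (pr s f)"
      using decomp[OF _ False] r(2) step.prems(2) by metis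
    have ta: "tadd (tadd X Y) Z = tadd (tadd X Z) Y" for X Y Z :: "'a tseq"
      by (cases X; cases Y; cases Z) (auto simp: ac_simps)
    have "nonK_rule (map (tadd (tadd E a)) as') (tadd (tadd E a) (pr s' f'))"
      by (rule rule_bwd[OF r(1)])
    moreover have "derivable n q" if qin: "q \<in> set (map (tadd (tadd E a)) as')" for q
    proof -
      obtain a' where a': "a' \<in> set as'" "q = tadd (tadd E a) a'" using qin unfolding set_map by blast
      have "tadd C' a' \<in> set ps" using r(3) a' by auto
      moreover have "tadd C' a' = tadd (tadd E a') (pr s f)" using E ta by simp
      ultimately have "derivable n (tadd (tadd E a') a)"
        using conjunct2[OF bspec[OF step.IH], rule_format, OF _ step.prems(1) _ step.prems(3)] by metis
      then show ?thesis using a' ta by simp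
    qed
    ultimately have "derivable (Suc n) (tadd (tadd E a) (pr s' f'))"
      by (blast intro: derivable.step)
    then show ?thesis using E ta by simp
  qed
qed

theorem proposition6p10:
  fixes ps :: "('a::finite) tseq list" and c :: "'a tseq" and n :: nat
  assumes "nonK_rule ps c" and "derivable n c"
  shows "\<forall>p\<in>set ps. derivable n p"
  using rule_fwd[OF assms(1)] main[OF assms(2)] by auto

end
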